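(* Let $I=\langle K,f,f',s,t,P\rangle$ be an instance of \textsc{Sub-STS} where $K=(V,E)$ is a complete graph, $P\subseteq V$, $f(s)=f'(t)=0$, $f(v)\neq 0$ for all $v\neq s$, and $f'(v)\neq 0$ for all $v\neq t$, and where $f$ and $f'$ color the same number of vertices with each color. Let $R=\{v\in V\mid f(v)\neq f'(v)\}\cup\{s,t\}\cup P$, and let $D$ be the directed multigraph (self-loops and parallel edges allowed) with vertex set $\{f(v)\mid v\in R\}$ and edge multiset $\{(f(v),f'(v))\mid v\in R\}$ (one edge per $v\in R$). Let $\mathrm{cc}(D)$ be the number of connected components of $D$. Then $\lambda(I)\ge |R|+\mathrm{cc}(D)-2$.
   Context: Colorings are arbitrary maps from $V$ to a set of colors. A swapping sequence of length $p-1$ from $f$ to $f'$ is a sequence $\langle f_1,\dots,f_p\rangle$ of colorings with $f_1=f$, $f_p=f'$, together with a walk $\langle w_1,\dots,w_p\rangle$ such that for $2\le i\le p$, $f_i$ is obtained from $f_{i-1}$ by swapping the colors of $w_{i-1}$ and $w_i$ (other vertices unchanged). For an instance $I=\langle G,f,f',s,t,P\rangle$ of \textsc{Sub-STS}, $\lambda(I)$ is the minimum length of a swapping sequence from $f$ to $f'$ whose walk $\langle w_1,\dots,w_m\rangle$ satisfies $w_1=s$, $w_m=t$ and $P\subseteq\{w_1,\dots,w_m\}$, and $\infty$ if none exists. *)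

theory Defs
  imports Main "HOL-Library.Extended_Nat"
begin

definition swap_col :: "('a \<Rightarrow> 'c) \<Rightarrow> 'a \<Rightarrow> 'a \<Rightarrow> ('a \<Rightarrow> 'c)" where
  "swap_col g u v = g(u := g v, v := g u)"

definition is_walk :: "'a set \<Rightarrow> ('a \<Rightarrow> 'a \<Rightarrow> bool) \<Rightarrow> 'a list \<Rightarrow> bool" where
  "is_walk V E ws \<longleftrightarrow> ws \<noteq> [] \<and> set ws \<subseteq> V \<and>
     (\<forall>i. Suc i < length ws \<longrightarrow> E (ws ! i) (ws ! Suc i))"

text \<open>A swapping sequence <f_1..f_p> with walk <w_1..w_p> from f to f'
  (colourings compared on the vertex set V); its length is p-1.\<close>
definition swapping_seq :: "'a set \<Rightarrow> ('a \<Rightarrow> 'a \<Rightarrow> bool) \<Rightarrow> ('a \<Rightarrow> 'c) \<Rightarrow> ('a \<Rightarrow> 'c)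
    \<Rightarrow> ('a \<Rightarrow> 'c) list \<Rightarrow> 'a list \<Rightarrow> bool" where
  "swapping_seq V E f f' fs ws \<longleftrightarrow>
     is_walk V E ws \<and> length fs = length ws \<and>
     (\<forall>v\<in>V. hd fs v = f v) \<and> (\<forall>v\<in>V. last fs v = f' v) \<and>
     (\<forall>i. Suc i < length fs \<longrightarrow>
        fs ! Suc i = swap_col (fs ! i) (ws ! i) (ws ! Suc i))"

text \<open>lambda(I) for the Sub-STS instance <(V,E),f,f',s,t,P>; infinity if no sequence exists.\<close>
definition sub_sts_lambda :: "'a set \<Rightarrow> ('a \<Rightarrow> 'a \<Rightarrow> bool) \<Rightarrow> ('a \<Rightarrow> 'c) \<Rightarrow> ('a \<Rightarrow> 'c)
    \<Rightarrow> 'a \<Rightarrow> 'a \<Rightarrow> 'a set \<Rightarrow> enat" where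
  "sub_sts_lambda V E f f' s t P =
     Inf {enat (length ws - 1) | fs ws. swapping_seq V E f f' fs ws \<and>
            hd ws = s \<and> last ws = t \<and> P \<subseteq> set ws}"

definition D_edges :: "('a \<Rightarrow> 'c) \<Rightarrow> ('a \<Rightarrow> 'c) \<Rightarrow> 'a set \<Rightarrow> ('c \<times> 'c) set" where
  "D_edges f f' R = {(f v, f' v) | v. v \<in> R}"

definition D_cc :: "('a \<Rightarrow> 'c) \<Rightarrow> ('a \<Rightarrow> 'c) \<Rightarrow> 'a set \<Rightarrow> nat" where
  "D_cc f f' R = card ((\<lambda>a. {b \<in> f ` R. (a, b) \<in> (D_edges f f' R \<union> (D_edges f f' R)\<inverse>)\<^sup>*}) ` (f ` R))"

end

theory Submission
  imports Defs
begin

definition cl :: "('c \<times> 'c) set \<Rightarrow> ('c \<times> 'c) set" where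
  "cl E = (E \<union> E\<inverse>)\<^sup>*"

definition ccn :: "'c set \<Rightarrow> ('c \<times> 'c) set \<Rightarrow> nat" where
  "ccn S E = card ((\<lambda>a. {b \<in> S. (a, b) \<in> cl E}) ` S)"

lemma cl_refl[simp]: "(a, a) \<in> cl E" by (simp add: cl_def)

lemma cl_sym: assumes "(a, b) \<in> cl E" shows "(b, a) \<in> cl E"
proof -
  have "sym (cl E)" unfolding cl_def by (rule sym_rtrancl[OF sym_Un_converse])
  thus ?thesis using assms by (rule symD)
qed

lemma cl_trans: "(a, b) \<in> cl E \<Longrightarrow> (b, c) \<in> cl E \<Longrightarrow> (a, c) \<in> cl E"
  unfolding cl_def by (rule rtrancl_trans)

lemma cl_edge: "(a, b) \<in> E \<Longrightarrow> (a, b) \<in> cl E"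
  unfolding cl_def by (rule r_into_rtrancl) simp

lemma cl_edge': "(a, b) \<in> E \<Longrightarrow> (b, a) \<in> cl E"
  unfolding cl_def by (rule r_into_rtrancl) simp

lemma cl_class_eq: "(a, a') \<in> cl E \<Longrightarrow> {b \<in> S. (a, b) \<in> cl E} = {b \<in> S. (a', b) \<in> cl E}"
proof (rule set_eqI)
  fix b assume h: "(a, a') \<in> cl E"
  show "b \<in> {b \<in> S. (a, b) \<in> cl E} \<longleftrightarrow> b \<in> {b \<in> S. (a', b) \<in> cl E}"
  proof -
    have 1: "(a', b) \<in> cl E" if "(a, b) \<in> cl E" using cl_trans[OF cl_sym[OF h] that] .
    have 2: "(a, b) \<in> cl E" if "(a', b) \<in> cl E" using cl_trans[OF h that] .
    show ?thesis using 1 2 by blast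
  qed
qed

lemma cl_mono: "E2 \<subseteq> cl E1 \<Longrightarrow> cl E2 \<subseteq> cl E1"
proof -
  assume h: "E2 \<subseteq> cl E1"
  have "E2\<inverse> \<subseteq> cl E1"
  proof (rule subsetI)
    fix p assume "p \<in> E2\<inverse>"
    then obtain x y where "p = (x, y)" "(y, x) \<in> E2" by auto
    thus "p \<in> cl E1" using h cl_sym[of y x E1] by auto
  qed
  hence "E2 \<union> E2\<inverse> \<subseteq> cl E1" using h by simp
  hence "(E2 \<union> E2\<inverse>)\<^sup>* \<subseteq> (cl E1)\<^sup>*" by (rule rtrancl_mono)
  thus ?thesis unfolding cl_def by simp
qed

lemma card_image_factor:
  assumes "finite A" "\<And>x y. x \<in> A \<Longrightarrow> y \<in> A \<Longrightarrow> g x = g y \<Longrightarrow> f x = f y"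
  shows "card (f ` A) \<le> card (g ` A)"
proof -
  define h where "h = (\<lambda>z. f (inv_into A g z))"
  have "f ` A = h ` (g ` A)"
  proof (rule set_eqI, rule iffI)
    fix z assume "z \<in> f ` A"
    then obtain x where x: "x \<in> A" "z = f x" by blast
    have "inv_into A g (g x) \<in> A" "g (inv_into A g (g x)) = g x"
      using x by (auto intro: inv_into_into f_inv_into_f)
    hence "h (g x) = f x" using assms(2) x unfolding h_def by metis
    moreover have "h (g x) \<in> h ` (g ` A)" using x by simp
    ultimately show "z \<in> h ` (g ` A)" using x by simp
  next
    fix z assume "z \<in> h ` (g ` A)"
    then obtain x where x: "x \<in> A" "z = h (g x)" by blast
    thus "z \<in> f ` A" unfolding h_def using inv_into_into[of "g x" g A] by blast
  qed
  thus ?thesis using card_image_le[of "g ` A" h] assms(1) by simp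
qed

lemma ccn_mono:
  assumes fin: "finite S2" and E: "E2 \<subseteq> cl E1"
    and V: "\<And>a. a \<in> S1 \<Longrightarrow> \<exists>a'\<in>S2. (a, a') \<in> cl E1"
  shows "ccn S1 E1 \<le> ccn S2 E2"
proof -
  define K1 where "K1 = (\<lambda>a. {b \<in> S1. (a, b) \<in> cl E1})"
  define K2 where "K2 = (\<lambda>a. {b \<in> S2. (a, b) \<in> cl E2})"
  have K1eq: "K1 a = K1 a'" if "(a, a') \<in> cl E1" for a a'
    unfolding K1_def using that by (rule cl_class_eq)
  have "K1 ` S1 \<subseteq> K1 ` S2"
  proof
    fix z assume "z \<in> K1 ` S1"
    then obtain a where "a \<in> S1" "z = K1 a" by blast
    with V obtain a' where "a' \<in> S2" "(a, a') \<in> cl E1" by blast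
    thus "z \<in> K1 ` S2" using K1eq \<open>z = K1 a\<close> by blast
  qed
  hence "card (K1 ` S1) \<le> card (K1 ` S2)" using fin by (simp add: card_mono)
  also have "\<dots> \<le> card (K2 ` S2)"
  proof (rule card_image_factor[OF fin])
    fix x y assume "x \<in> S2" "y \<in> S2" "K2 x = K2 y"
    hence "y \<in> K2 x" unfolding K2_def by auto
    hence "(x, y) \<in> cl E2" unfolding K2_def by auto
    hence "(x, y) \<in> cl E1" using cl_mono[OF E] by blast
    thus "K1 x = K1 y" by (rule K1eq)
  qed
  finally show ?thesis unfolding ccn_def K1_def K2_def .
qed

lemma cl_insert:
  assumes "(a, b) \<in> cl (insert (u, v) E)"
  shows "(a, b) \<in> cl E \<or> ((a, u) \<in> cl E \<and> (v, b) \<in> cl E) \<or> ((a, v) \<in> cl E \<and> (u, b) \<in> cl E)"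
  using assms unfolding cl_def[of "insert (u, v) E"]
proof (induction rule: rtrancl_induct)
  case base thus ?case by simp
next
  case (step y z)
  from step.hyps(2) have "(y, z) \<in> E \<union> E\<inverse> \<or> (y = u \<and> z = v) \<or> (y = v \<and> z = u)"
    by auto
  moreover have "(y, z) \<in> cl E" if "(y, z) \<in> E \<union> E\<inverse>"
    using that unfolding cl_def by (rule r_into_rtrancl)
  ultimately have c: "(y, z) \<in> cl E \<or> (y = u \<and> z = v) \<or> (y = v \<and> z = u)" by blast
  from step.IH show ?case
  proof (elim disjE conjE)
    assume h: "(a, y) \<in> cl E"
    from c show ?case
    proof (elim disjE conjE)
      assume "(y, z) \<in> cl E" thus ?case using cl_trans[OF h] by simp
    next
      assume "y = u" "z = v" thus ?case using h by simp
    next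
      assume "y = v" "z = u" thus ?case using h by simp
    qed
  next
    assume h1: "(a, u) \<in> cl E" and h2: "(v, y) \<in> cl E"
    from c show ?case
    proof (elim disjE conjE)
      assume "(y, z) \<in> cl E" thus ?case using cl_trans[OF h2] h1 by simp
    next
      assume "y = u" "z = v" thus ?case using h1 by simp
    next
      assume "y = v" "z = u" thus ?case using h1 by simp
    qed
  next
    assume h1: "(a, v) \<in> cl E" and h2: "(u, y) \<in> cl E"
    from c show ?case
    proof (elim disjE conjE)
      assume "(y, z) \<in> cl E" thus ?case using cl_trans[OF h2] h1 by simp
    next
      assume "y = u" "z = v" thus ?case using h1 by simp
    next
      assume "y = v" "z = u" thus ?case using h1 by simp
    qed
  qed
qed

lemma ccn_insert:
  assumes fin: "finite S"
  shows "ccn S E \<le> ccn S (insert (u, v) E) + 1"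
proof -
  define K where "K = (\<lambda>a. {b \<in> S. (a, b) \<in> cl E})"
  define K' where "K' = (\<lambda>a. {b \<in> S. (a, b) \<in> cl (insert (u, v) E)})"
  define S0 where "S0 = {a \<in> S. (v, a) \<notin> cl E}"
  have S0S: "S0 \<subseteq> S" unfolding S0_def by blast
  have fin0: "finite S0" using fin S0S by (rule finite_subset[rotated])
  have "K ` S \<subseteq> insert (K v) (K ` S0)"
  proof
    fix z assume "z \<in> K ` S"
    then obtain a where a: "a \<in> S" "z = K a" by blast
    show "z \<in> insert (K v) (K ` S0)"
    proof (cases "(v, a) \<in> cl E")
      case True
      hence "K a = K v" unfolding K_def using cl_class_eq[OF cl_sym[OF True]] by simp
      thus ?thesis using a by simp
    next
      case False
      hence "a \<in> S0" using a unfolding S0_def by simp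
      thus ?thesis using a by simp
    qed
  qed
  moreover have "finite (insert (K v) (K ` S0))" using fin0 by simp
  ultimately have "card (K ` S) \<le> card (insert (K v) (K ` S0))"
    by (rule card_mono[rotated])
  also have "\<dots> \<le> card (K ` S0) + 1" using fin0 by (simp add: card_insert_if)
  also have "card (K ` S0) \<le> card (K' ` S0)"
  proof (rule card_image_factor[OF fin0])
    fix x y assume xy: "x \<in> S0" "y \<in> S0" "K' x = K' y"
    have yS: "y \<in> S" using xy(2) S0S by blast
    have "y \<in> K' y" unfolding K'_def using yS by simp
    hence "y \<in> K' x" using xy(3) by simp
    hence "(x, y) \<in> cl (insert (u, v) E)" unfolding K'_def by simp
    from cl_insert[OF this] have d: "(x, y) \<in> cl E \<or> (v, y) \<in> cl E \<or> (x, v) \<in> cl E" by blast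
    have n1: "(v, y) \<notin> cl E" using xy(2) unfolding S0_def by simp
    have n2: "(x, v) \<notin> cl E"
    proof
      assume "(x, v) \<in> cl E"
      hence "(v, x) \<in> cl E" by (rule cl_sym)
      thus False using xy(1) unfolding S0_def by simp
    qed
    from d n1 n2 have "(x, y) \<in> cl E" by simp
    thus "K x = K y" unfolding K_def by (rule cl_class_eq)
  qed
  also have "card (K' ` S0) \<le> card (K' ` S)"
    using fin S0S by (intro card_mono) auto
  finally show ?thesis unfolding ccn_def K_def K'_def by simp
qed

lemma ccn_card_le: "finite S \<Longrightarrow> ccn S E \<le> card S"
  unfolding ccn_def by (rule card_image_le)

lemma Dedges_sub:
  assumes "\<And>v. v \<in> R \<Longrightarrow> (g v, f' v) \<in> cl E1"
  shows "D_edges g f' R \<subseteq> cl E1"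
  using assms unfolding D_edges_def by blast

lemma Dverts:
  assumes "\<And>v. v \<in> R \<Longrightarrow> \<exists>u\<in>R'. (g v, g' u) \<in> cl E1"
  shows "\<And>z. z \<in> g ` R \<Longrightarrow> \<exists>z'\<in>g' ` R'. (z, z') \<in> cl E1"
  using assms by blast

lemma Dedge_in: "v \<in> R \<Longrightarrow> (g v, f' v) \<in> D_edges g f' R"
  unfolding D_edges_def by blast

lemma potential:
  fixes g f' :: "'a \<Rightarrow> 'c::zero"
  assumes fin: "finite V" and bV: "b \<in> V" and wV: "w \<in> V" and bw: "b \<noteq> w"
    and tV: "t \<in> V" and PV: "P \<subseteq> V" and gb: "g b = 0"
  defines "g' \<equiv> swap_col g b w"
  defines "R \<equiv> {v \<in> V. g v \<noteq> f' v} \<union> {b, t} \<union> P"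
  defines "R' \<equiv> {v \<in> V. g' v \<noteq> f' v} \<union> {w, t} \<union> (P - {b})"
  shows "card R + ccn (g ` R) (D_edges g f' R)
           \<le> card R' + ccn (g' ` R') (D_edges g' f' R') + 1"
proof -
  define x where "x = g w"
  define D where "D = D_edges g f' R"
  define D' where "D' = D_edges g' f' R'"
  have g'b: "g' b = x" unfolding g'_def swap_col_def x_def using bw by simp
  have g'w: "g' w = 0" unfolding g'_def swap_col_def using gb by simp
  have g'o: "g' v = g v" if "v \<noteq> b" "v \<noteq> w" for v
    unfolding g'_def swap_col_def using that by simp
  have RV: "R \<subseteq> V" unfolding R_def using bV tV PV by blast
  have R'V: "R' \<subseteq> V" unfolding R'_def using wV tV PV by blast
  have finR: "finite R" using fin RV by (rule finite_subset[rotated])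
  have finR': "finite R'" using fin R'V by (rule finite_subset[rotated])
  have finS': "finite (g' ` R')" using finR' by simp
  have finS: "finite (g ` R)" using finR by simp
  have bR: "b \<in> R" unfolding R_def by blast
  have wR': "w \<in> R'" unfolding R'_def by blast
  have same: "v \<in> R \<longleftrightarrow> v \<in> R'" if "v \<noteq> b" "v \<noteq> w" for v
    unfolding R_def R'_def using that g'o[OF that] by auto
  have bR'iff: "b \<in> R' \<longleftrightarrow> (x \<noteq> f' b \<or> b = t)"
    unfolding R'_def using g'b bV bw by auto
  have wRiff: "w \<in> R \<longleftrightarrow> (x \<noteq> f' w \<or> w = t \<or> w \<in> P)"
    unfolding R_def x_def using wV bw by auto
  have eb: "(0, f' b) \<in> D" unfolding D_def using Dedge_in[OF bR, of g f'] gb by simp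
  have ew: "(x, f' w) \<in> D" if "w \<in> R" unfolding D_def x_def using Dedge_in[OF that] .
  have common_e: "(g' v, f' v) \<in> D" if "v \<in> R'" "v \<noteq> b" "v \<noteq> w" for v
    using Dedge_in[of v R g f'] same[OF that(2,3)] that g'o[OF that(2,3)] unfolding D_def by simp
  have common_v: "g v = g' v" "v \<in> R'" if "v \<in> R" "v \<noteq> b" "v \<noteq> w" for v
    using same[OF that(2,3)] that g'o[OF that(2,3)] by auto
  show ?thesis
  proof (cases "w \<in> R")
    case wR: True
    show ?thesis
    proof (cases "b \<in> R'")
      case bR': True
      have "R' = R"
      proof (rule set_eqI)
        fix v show "v \<in> R' \<longleftrightarrow> v \<in> R"
          using same[of v] wR bR' bR wR' by (cases "v = b"; cases "v = w") auto
      qed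
      hence cardeq: "card R' = card R" by simp
      define X where "X = insert (0, x) D"
      have c1: "ccn (g ` R) D \<le> ccn (g ` R) X + 1" unfolding X_def using ccn_insert[OF finS] .
      have c2: "ccn (g ` R) X \<le> ccn (g' ` R') D'"
      proof (rule ccn_mono[OF finS'])
        have DX: "D \<subseteq> cl X"
        proof (rule subsetI)
          fix p assume "p \<in> D"
          hence "p \<in> X" unfolding X_def by simp
          thus "p \<in> cl X" by (cases p) (simp add: cl_edge)
        qed
        have x0: "(0, x) \<in> X" unfolding X_def by simp
        have ox: "(0, x) \<in> cl X" "(x, 0) \<in> cl X"
          using cl_edge[OF x0] cl_edge'[OF x0] by simp_all
        show "D' \<subseteq> cl X" unfolding D'_def
        proof (rule Dedges_sub)
          fix v assume v: "v \<in> R'"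
          show "(g' v, f' v) \<in> cl X"
          proof (cases "v = b")
            case True
            have "(0, f' b) \<in> cl X" using DX eb by blast
            thus ?thesis using True g'b cl_trans[OF ox(2)] by simp
          next
            case nb: False
            show ?thesis
            proof (cases "v = w")
              case True
              have "(x, f' w) \<in> cl X" using DX ew[OF wR] by blast
              thus ?thesis using True g'w cl_trans[OF ox(1)] by simp
            next
              case False thus ?thesis using common_e[OF v nb False] DX by auto
            qed
          qed
        qed
        show "\<exists>a'\<in>g' ` R'. (a, a') \<in> cl X" if "a \<in> g ` R" for a
        proof (rule Dverts[OF _ that])
          fix v assume v: "v \<in> R"
          show "\<exists>u\<in>R'. (g v, g' u) \<in> cl X"
          proof (cases "v = b")
            case True thus ?thesis using gb g'w wR' by (intro bexI[of _ w]) auto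
          next
            case nb: False
            show ?thesis
            proof (cases "v = w")
              case True
              have "(g v, g' b) \<in> cl X" using True g'b x_def by simp
              thus ?thesis using bR' by blast
            next
              case False thus ?thesis using common_v[OF v nb False] by (intro bexI[of _ v]) auto
            qed
          qed
        qed
      qed
      have "ccn (g ` R) D \<le> ccn (g' ` R') D' + 1" using c1 c2 by linarith
      thus ?thesis using cardeq unfolding D_def D'_def by simp
    next
      case bR': False
      hence xa: "x = f' b" and bt: "b \<noteq> t" using bR'iff by auto
      have "R' = R - {b}"
      proof (rule set_eqI)
        fix v show "v \<in> R' \<longleftrightarrow> v \<in> R - {b}"
          using same[of v] wR bR' bR wR' bw by (cases "v = b"; cases "v = w") auto
      qed
      moreover have "card R > 0" using finR bR card_gt_0_iff by blast
      ultimately have cardeq: "card R = card R' + 1" using finR bR by simp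
      have "ccn (g ` R) D \<le> ccn (g' ` R') D'"
      proof (rule ccn_mono[OF finS'])
        have DX: "D \<subseteq> cl D"
        proof (rule subsetI)
          fix p assume "p \<in> D"
          thus "p \<in> cl D" by (cases p) (simp add: cl_edge)
        qed
        show "D' \<subseteq> cl D" unfolding D'_def
        proof (rule Dedges_sub)
          fix v assume v: "v \<in> R'"
          show "(g' v, f' v) \<in> cl D"
          proof (cases "v = b")
            case True thus ?thesis using v bR' by simp
          next
            case nb: False
            show ?thesis
            proof (cases "v = w")
              case True
              have 1: "(0, x) \<in> cl D" using eb xa cl_edge by simp
              have 2: "(x, f' w) \<in> cl D" using DX ew[OF wR] by blast
              show ?thesis using True g'w cl_trans[OF 1 2] by simp
            next
              case False thus ?thesis using common_e[OF v nb False] DX by auto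
            qed
          qed
        qed
        show "\<exists>a'\<in>g' ` R'. (a, a') \<in> cl D" if "a \<in> g ` R" for a
        proof (rule Dverts[OF _ that])
          fix v assume v: "v \<in> R"
          show "\<exists>u\<in>R'. (g v, g' u) \<in> cl D"
          proof (cases "v = b")
            case True thus ?thesis using gb g'w wR' by (intro bexI[of _ w]) auto
          next
            case nb: False
            show ?thesis
            proof (cases "v = w")
              case True
              have "(x, 0) \<in> cl D" using eb xa cl_edge' by simp
              thus ?thesis using True g'w wR' x_def by (intro bexI[of _ w]) auto
            next
              case False thus ?thesis using common_v[OF v nb False] by (intro bexI[of _ v]) auto
            qed
          qed
        qed
      qed
      thus ?thesis using cardeq unfolding D_def D'_def by simp
    qed
  next
    case wR: False
    hence xc: "x = f' w" using wRiff by auto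
    have ccle: "ccn (g ` R) D \<le> ccn (g' ` R') D' + 1"
    proof -
      define X where "X = insert (0, x) D"
      have c1: "ccn (g ` R) D \<le> ccn (g ` R) X + 1" unfolding X_def using ccn_insert[OF finS] .
      have c2: "ccn (g ` R) X \<le> ccn (g' ` R') D'"
      proof (rule ccn_mono[OF finS'])
        have DX: "D \<subseteq> cl X"
        proof (rule subsetI)
          fix p assume "p \<in> D"
          hence "p \<in> X" unfolding X_def by simp
          thus "p \<in> cl X" by (cases p) (simp add: cl_edge)
        qed
        have x0: "(0, x) \<in> X" unfolding X_def by simp
        have ox: "(0, x) \<in> cl X" "(x, 0) \<in> cl X"
          using cl_edge[OF x0] cl_edge'[OF x0] by simp_all
        show "D' \<subseteq> cl X" unfolding D'_def
        proof (rule Dedges_sub)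
          fix v assume v: "v \<in> R'"
          show "(g' v, f' v) \<in> cl X"
          proof (cases "v = b")
            case True
            have "(0, f' b) \<in> cl X" using DX eb by blast
            thus ?thesis using True g'b cl_trans[OF ox(2)] by simp
          next
            case nb: False
            show ?thesis
            proof (cases "v = w")
              case True
              thus ?thesis using g'w ox(1) xc by simp
            next
              case False thus ?thesis using common_e[OF v nb False] DX by auto
            qed
          qed
        qed
        show "\<exists>a'\<in>g' ` R'. (a, a') \<in> cl X" if "a \<in> g ` R" for a
        proof (rule Dverts[OF _ that])
          fix v assume v: "v \<in> R"
          show "\<exists>u\<in>R'. (g v, g' u) \<in> cl X"
          proof (cases "v = b")
            case True thus ?thesis using gb g'w wR' by (intro bexI[of _ w]) auto
          next
            case nb: False
            have "v \<noteq> w" using v wR by auto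
            thus ?thesis using common_v[OF v nb] by (intro bexI[of _ v]) auto
          qed
        qed
      qed
      show ?thesis using c1 c2 by linarith
    qed
    have "card R \<le> card R'"
    proof (cases "b \<in> R'")
      case True
      have "R' = insert w R"
      proof (rule set_eqI)
        fix v show "v \<in> R' \<longleftrightarrow> v \<in> insert w R"
          using same[of v] wR True bR wR' by (cases "v = b"; cases "v = w") auto
      qed
      thus ?thesis using finR by (simp add: card_insert_le)
    next
      case False
      have "R' = insert w (R - {b})"
      proof (rule set_eqI)
        fix v show "v \<in> R' \<longleftrightarrow> v \<in> insert w (R - {b})"
          using same[of v] wR False bR wR' bw by (cases "v = b"; cases "v = w") auto
      qed
      moreover have "card R > 0" using finR bR card_gt_0_iff by blast
      ultimately have "card R' = card R" using finR bR wR by simp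
      thus ?thesis by simp
    qed
    thus ?thesis using ccle unfolding D_def D'_def by simp
  qed
qed

lemma main:
  fixes fs :: "('a \<Rightarrow> 'c::zero) list" and f' :: "'a \<Rightarrow> 'c"
  assumes fin: "finite V" and complete: "\<And>u v. E u v \<longleftrightarrow> u \<in> V \<and> v \<in> V \<and> u \<noteq> v"
  shows "swapping_seq V E (hd fs) f' fs ws \<Longrightarrow> hd ws = b \<Longrightarrow> hd fs b = 0 \<Longrightarrow> last ws = t
    \<Longrightarrow> P \<subseteq> set ws \<Longrightarrow> P \<subseteq> V \<Longrightarrow>
    card ({v \<in> V. hd fs v \<noteq> f' v} \<union> {b, t} \<union> P)
    + ccn (hd fs ` ({v \<in> V. hd fs v \<noteq> f' v} \<union> {b, t} \<union> P))
          (D_edges (hd fs) f' ({v \<in> V. hd fs v \<noteq> f' v} \<union> {b, t} \<union> P))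
    \<le> length ws + 1"
proof (induction ws arbitrary: fs b P)
  case Nil thus ?case unfolding swapping_seq_def is_walk_def by simp
next
  case (Cons b0 ws')
  have sw: "swapping_seq V E (hd fs) f' fs (b0 # ws')" by fact
  have bb: "b0 = b" using Cons.prems(2) by simp
  have walk: "is_walk V E (b0 # ws')" and len: "length fs = length (b0 # ws')"
    and lastf: "\<forall>v\<in>V. last fs v = f' v"
    and stp: "\<And>i. Suc i < length fs \<Longrightarrow> fs ! Suc i = swap_col (fs ! i) ((b0 # ws') ! i) ((b0 # ws') ! Suc i)"
    using sw unfolding swapping_seq_def by auto
  have setV: "set (b0 # ws') \<subseteq> V" using walk unfolding is_walk_def by simp
  have tV: "t \<in> V" using Cons.prems(4) setV last_in_set[of "b0 # ws'"] by auto
  have bV: "b \<in> V" using bb setV by simp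
  obtain g fs' where fsd: "fs = g # fs'" using len by (cases fs) auto
  show ?case
  proof (cases ws')
    case Nil
    have fs'n: "fs' = []" using len fsd Nil by simp
    have tb: "t = b" using Cons.prems(4) Nil bb by simp
    have Pb: "P \<subseteq> {b}" using Cons.prems(5) Nil bb by simp
    have "\<forall>v\<in>V. g v = f' v" using lastf fsd fs'n by simp
    hence R: "{v \<in> V. hd fs v \<noteq> f' v} \<union> {b, t} \<union> P = {b}" using fsd tb Pb by auto
    have "ccn (hd fs ` {b}) (D_edges (hd fs) f' {b}) \<le> card (hd fs ` {b})"
      by (rule ccn_card_le) simp
    thus ?thesis unfolding R using Nil by simp
  next
    case (Cons w ws'')
    have fs'ne: "fs' \<noteq> []" using len fsd Cons by auto
    have Ebw: "E b w" using walk Cons bb unfolding is_walk_def by force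
    hence wV: "w \<in> V" and bw: "b \<noteq> w" using complete by auto
    have hd': "hd fs' = swap_col g b w"
      using stp[of 0] fsd fs'ne bb Cons by (cases fs') auto
    have sw': "swapping_seq V E (hd fs') f' fs' ws'"
      unfolding swapping_seq_def
    proof (intro conjI allI impI ballI)
      show "is_walk V E ws'" using walk Cons unfolding is_walk_def
      proof (intro conjI allI impI)
        fix i assume "Suc i < length ws'"
        thus "E (ws' ! i) (ws' ! Suc i)" using walk unfolding is_walk_def
          by (metis Suc_less_eq length_Cons nth_Cons_Suc)
      qed (auto simp: Cons)
      show "length fs' = length ws'" using len fsd by simp
      fix v assume "v \<in> V"
      show "hd fs' v = hd fs' v" by simp
      show "last fs' v = f' v" using lastf \<open>v \<in> V\<close> fsd fs'ne by simp
    next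
      fix i assume i: "Suc i < length fs'"
      show "fs' ! Suc i = swap_col (fs' ! i) (ws' ! i) (ws' ! Suc i)"
        using stp[of "Suc i"] i fsd by simp
    qed
    have hw: "hd ws' = w" using Cons by simp
    have h0: "hd fs' w = 0" using hd' Cons.prems(3) fsd unfolding swap_col_def by simp
    have lt: "last ws' = t" using Cons.prems(4) Cons by simp
    have Ps: "P - {b} \<subseteq> set ws'" using Cons.prems(5) bb by auto
    have PV': "P - {b} \<subseteq> V" using Cons.prems(6) by auto
    have IH: "card ({v \<in> V. hd fs' v \<noteq> f' v} \<union> {w, t} \<union> (P - {b}))
    + ccn (hd fs' ` ({v \<in> V. hd fs' v \<noteq> f' v} \<union> {w, t} \<union> (P - {b})))
          (D_edges (hd fs') f' ({v \<in> V. hd fs' v \<noteq> f' v} \<union> {w, t} \<union> (P - {b})))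
    \<le> length ws' + 1"
      using Cons.IH[OF sw' hw h0 lt Ps PV'] .
    have gb: "g b = 0" using Cons.prems(3) fsd by simp
    have pot: "card ({v \<in> V. g v \<noteq> f' v} \<union> {b, t} \<union> P) + ccn (g ` ({v \<in> V. g v \<noteq> f' v} \<union> {b, t} \<union> P)) (D_edges g f' ({v \<in> V. g v \<noteq> f' v} \<union> {b, t} \<union> P))
           \<le> card ({v \<in> V. swap_col g b w v \<noteq> f' v} \<union> {w, t} \<union> (P - {b}))
             + ccn (swap_col g b w ` ({v \<in> V. swap_col g b w v \<noteq> f' v} \<union> {w, t} \<union> (P - {b})))
                (D_edges (swap_col g b w) f' ({v \<in> V. swap_col g b w v \<noteq> f' v} \<union> {w, t} \<union> (P - {b}))) + 1"
      by (rule potential[where g=g and b=b and f'=f', OF fin bV wV bw tV Cons.prems(6) gb])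
    show ?thesis using pot IH hd' fsd by simp
  qed
qed

theorem lemma5:
  fixes V :: "'a set" and E :: "'a \<Rightarrow> 'a \<Rightarrow> bool"
    and f f' :: "'a \<Rightarrow> 'c::zero" and s t :: 'a and P :: "'a set"
  assumes "finite V"
    and complete: "\<And>u v. E u v \<longleftrightarrow> u \<in> V \<and> v \<in> V \<and> u \<noteq> v"
    and "s \<in> V" "t \<in> V" "P \<subseteq> V"
    and "f s = 0" "f' t = 0"
    and "\<And>v. v \<in> V \<Longrightarrow> v \<noteq> s \<Longrightarrow> f v \<noteq> 0"
    and "\<And>v. v \<in> V \<Longrightarrow> v \<noteq> t \<Longrightarrow> f' v \<noteq> 0"
    and "\<And>c. card {v \<in> V. f v = c} = card {v \<in> V. f' v = c}"
    and R_def: "R = {v \<in> V. f v \<noteq> f' v} \<union> {s, t} \<union> P"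
  shows "enat (card R + D_cc f f' R - 2) \<le> sub_sts_lambda V E f f' s t P"
  unfolding sub_sts_lambda_def
proof (rule Inf_greatest)
  fix x assume "x \<in> {enat (length ws - 1) | fs ws. swapping_seq V E f f' fs ws \<and>
            hd ws = s \<and> last ws = t \<and> P \<subseteq> set ws}"
  then obtain fs ws where xd: "x = enat (length ws - 1)" and sw: "swapping_seq V E f f' fs ws"
    and hs: "hd ws = s" and lt: "last ws = t" and Pw: "P \<subseteq> set ws" by blast
  have hdf: "\<forall>v\<in>V. hd fs v = f v" using sw unfolding swapping_seq_def by blast
  have ne: "ws \<noteq> []" using sw unfolding swapping_seq_def is_walk_def by blast
  have sw': "swapping_seq V E (hd fs) f' fs ws" using sw unfolding swapping_seq_def by blast
  have h0: "hd fs s = 0" using hdf assms(3,6) by simp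
  have RV: "R \<subseteq> V" unfolding R_def using assms(3,4,5) by blast
  have Req: "{v \<in> V. hd fs v \<noteq> f' v} \<union> {s, t} \<union> P = R" unfolding R_def using hdf by auto
  have img: "hd fs ` R = f ` R" using hdf RV by (auto intro!: image_cong)
  have de: "D_edges (hd fs) f' R = D_edges f f' R" unfolding D_edges_def using hdf RV by force
  have cc: "D_cc f f' R = ccn (f ` R) (D_edges f f' R)" unfolding D_cc_def ccn_def cl_def ..
  have "card R + D_cc f f' R \<le> length ws + 1"
    using main[OF assms(1) complete sw' hs h0 lt Pw assms(5)] unfolding Req img de cc .
  hence "card R + D_cc f f' R - 2 \<le> length ws - 1" using ne by (cases ws) auto
  thus "enat (card R + D_cc f f' R - 2) \<le> x" unfolding xd by simp
qed

end
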